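(* Assume the setting of the context. Fix $\widehat x^k$, $\delta_k>0$, points $x^1,\dots,x^{N_k}\in\mathcal{B}(\widehat x^k,\delta_k)$, realizations $\epsilon^1,\dots,\epsilon^{N_k}$ of $\tilde\epsilon$, and $\omega^i=\psi(x^i)+\epsilon^i$. Let $\widehat B^{k,1}\in\mathbb{R}^{n\times d}$, $\widehat B^{k,0}\in\mathbb{R}^{1\times d}$ be the least-squares coefficients, and let $$E_k:=\max_{z\in\mathcal{B}(\widehat x^k,\delta_k)}\big\|\psi(z)-(\widehat B^{k,1})^\top z-(\widehat B^{k,0})^\top\big\|.$$ For $x\in\mathcal{B}(\widehat x^k,\delta_k)$ define $y^{s,*}(x)=\arg\max_{y\in\mathcal{Y}}\frac1{N_k}\sum_{i}l(x,y,\psi(x)+\epsilon^i)$, $$\xi_k(x)=\frac1{N_k}\sum_{i}\nabla_y l(x,y^*(x),\psi(x)+\epsilon^i)-\mathbb{E}_{\tilde\epsilon}\big[\nabla_y l(x,y^*(x),\psi(x)+\tilde\epsilon)\big],$$ $$\tau_k(x)=\mathbb{E}_{\tilde\epsilon}\big[l(x,y^*(x),\psi(x)+\tilde\epsilon)\big]-\frac1{N_k}\sum_i l(x,y^*(x),\psi(x)+\epsilon^i).$$ Then for every $x\in\mathcal{B}(\widehat x^k,\delta_k)$: (a) $\|y^*(x)-y^{s,*}(x)\|\le\frac1\mu\|\xi_k(x)\|$; (b) $\|y^{k,*}(x)-y^{s,*}(x)\|\le\frac{2\ell_1}{\mu}E_k$; (c) $|\Phi(x)-\Phi^k(x)|\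le|\tau_k(x)|+\frac{L_1}{\mu}\|\xi_k(x)\|+2L_1\big(1+\frac{\ell_1}{\mu}\big)E_k$.
   Context: Standing assumptions: $l:\mathbb{R}^n\times\mathbb{R}^m\times\mathbb{R}^d\to\mathbb{R}$ is $\ell_1$-smooth (gradient $\ell_1$-Lipschitz) and $L_1$-Lipschitz; $\psi:\mathbb{R}^n\to\mathbb{R}^d$ is twice differentiable, $\ell_0$-smooth and $L_0$-Lipschitz; $\mathcal{Y}\subset\mathbb{R}^m$ is nonempty, closed, convex, bounded; $l(x,\cdot,z)$ is $\mu$-strongly concave on $\mathcal{Y}$ for all $(x,z)$; $\tilde\epsilon$ is a random vector in $\mathbb{R}^d$ with compact support and zero mean. $\mathcal{L}(x,y)=\mathbb{E}_{\tilde\epsilon}[l(x,y,\psi(x)+\tilde\epsilon)]$, $\Phi(x)=\max_{y\in\mathcal{Y}}\mathcal{L}(x,y)$, $y^*(x)=\arg\max_{y\in\mathcal{Y}}\mathcal{L}(x,y)$. $\mathcal{B}(x,\delta)=\{z:\|z-x\|\le\delta\}$. Least-squares coefficients: $(\widehat B^{k,0},\widehat B^{k,1})$ minimize $\sum_i\|\omega^i-(B^1)^\top x^i-(B^0)^\top\|^2$; residuals $e^{k,i}=\omega^i-(\widehat B^{k,1})^\top x^i-(\widehat B^{k,0})^\top$; $m_k(x,e)=(\widehat B^{k,1})^\top x+(\widehat B^{k,0})^\top+e$; $\mathcal{L}^k(x,y)=\frac1{N_k}\sum_i l(x,y,m_k(x,e^{k,i}))$; $\Phi^k(x)=\max_{y\in\mathcal{Y}}\mathcal{L}^k(x,y)$;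 $y^{k,*}(x)=\arg\max_{y\in\mathcal{Y}}\mathcal{L}^k(x,y)$. *)

theory Defs
  imports "HOL-Analysis.Analysis" "HOL-Probability.Probability"
begin

definition strongly_concave_on :: "real \<Rightarrow> 'a::real_normed_vector set \<Rightarrow> ('a \<Rightarrow> real) \<Rightarrow> bool" where
  "strongly_concave_on mu S f \<longleftrightarrow> convex S \<and>
     (\<forall>u\<in>S. \<forall>v\<in>S. \<forall>t::real. 0 \<le> t \<and> t \<le> 1 \<longrightarrow>
        t * f u + (1 - t) * f v + mu / 2 * t * (1 - t) * (norm (u - v))\<^sup>2 \<le> f (t *\<^sub>R u + (1 - t) *\<^sub>R v))"

text \<open>The (unique, when it exists) maximiser of f over S.\<close>
definition argmax_on :: "('a \<Rightarrow> real) \<Rightarrow> 'a set \<Rightarrow> 'a" where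
  "argmax_on f S = (THE y. y \<in> S \<and> (\<forall>y'\<in>S. f y' \<le> f y))"

definition max_on :: "('a \<Rightarrow> real) \<Rightarrow> 'a set \<Rightarrow> real" where
  "max_on f S = Sup (f ` S)"

definition calL :: "('d::euclidean_space) measure \<Rightarrow> ('n \<times> 'm \<times> 'd \<Rightarrow> real) \<Rightarrow> ('n \<Rightarrow> 'd) \<Rightarrow> 'n \<Rightarrow> 'm \<Rightarrow> real" where
  "calL P l psi x y = (\<integral>e. l (x, y, psi x + e) \<partial>P)"

definition PhiF :: "('d::euclidean_space) measure \<Rightarrow> ('n \<times> 'm \<times> 'd \<Rightarrow> real) \<Rightarrow> ('n \<Rightarrow> 'd) \<Rightarrow> 'm set \<Rightarrow> 'n \<Rightarrow> real" where
  "PhiF P l psi Y x = max_on (calL P l psi x) Y"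

definition ystar :: "('d::euclidean_space) measure \<Rightarrow> ('n \<times> 'm \<times> 'd \<Rightarrow> real) \<Rightarrow> ('n \<Rightarrow> 'd) \<Rightarrow> 'm set \<Rightarrow> 'n \<Rightarrow> 'm" where
  "ystar P l psi Y x = argmax_on (calL P l psi x) Y"

definition ls_obj :: "nat \<Rightarrow> (nat \<Rightarrow> real^'n) \<Rightarrow> (nat \<Rightarrow> real^'d) \<Rightarrow> real^'d \<Rightarrow> real^'d^'n \<Rightarrow> real" where
  "ls_obj N xs om B0 B1 = (\<Sum>i<N. (norm (om i - transpose B1 *v xs i - B0))\<^sup>2)"

definition resid :: "(nat \<Rightarrow> real^'n) \<Rightarrow> (nat \<Rightarrow> real^'d) \<Rightarrow> real^'d \<Rightarrow> real^'d^'n \<Rightarrow> nat \<Rightarrow> real^'d" where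
  "resid xs om B0 B1 i = om i - transpose B1 *v xs i - B0"

definition mk :: "real^'d \<Rightarrow> real^'d^'n \<Rightarrow> real^'n \<Rightarrow> real^'d \<Rightarrow> real^'d" where
  "mk B0 B1 x e = transpose B1 *v x + B0 + e"

definition calLk :: "nat \<Rightarrow> ((real^'n) \<times> 'm \<times> (real^'d) \<Rightarrow> real) \<Rightarrow> (nat \<Rightarrow> real^'n) \<Rightarrow> (nat \<Rightarrow> real^'d)
    \<Rightarrow> real^'d \<Rightarrow> real^'d^'n \<Rightarrow> real^'n \<Rightarrow> 'm \<Rightarrow> real" where
  "calLk N l xs om B0 B1 x y = (1 / real N) * (\<Sum>i<N. l (x, y, mk B0 B1 x (resid xs om B0 B1 i)))"

definition calLs :: "nat \<Rightarrow> ('n \<times> 'm \<times> 'd::real_normed_vector \<Rightarrow> real) \<Rightarrow> ('n \<Rightarrow> 'd) \<Rightarrow> (nat \<Rightarrow> 'd) \<Rightarrow> 'n \<Rightarrow> 'm \<Rightarrow> real" where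
  "calLs N l psi eps x y = (1 / real N) * (\<Sum>i<N. l (x, y, psi x + eps i))"

end

theory Submission
  imports Defs
begin

lemma gy_norm_le: "norm (fst (snd q)) \<le> norm (q :: 'a::real_normed_vector \<times> 'b::real_normed_vector \<times> 'c::real_normed_vector)"
  by (metis norm_fst_le norm_snd_le order_trans prod.collapse)

lemma small_le0:
  fixes c K :: real
  assumes "\<And>t. 0 < t \<Longrightarrow> t \<le> 1 \<Longrightarrow> c \<le> K * t"
  shows "c \<le> 0"
proof (rule ccontr)
  assume c: "\<not> c \<le> 0"
  define t where "t = min 1 (c / (2 * (\<bar>K\<bar> + 1)))"
  have t0: "0 < t" "t \<le> 1" using c by (auto simp: t_def)
  have "K * t \<le> (\<bar>K\<bar> + 1) * t" using t0 by (intro mult_right_mono) auto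
  also have "\<dots> \<le> (\<bar>K\<bar> + 1) * (c / (2 * (\<bar>K\<bar> + 1)))"
    by (intro mult_left_mono) (auto simp: t_def)
  also have "\<dots> = c / 2" by (simp add: field_simps)
  finally show False using assms[OF t0] c by linarith
qed

lemma sc_max_quad:
  fixes H :: "'a::real_normed_vector \<Rightarrow> real"
  assumes sc: "strongly_concave_on mu Y H" and y0: "y0 \<in> Y" and y1: "y1 \<in> Y"
    and mx: "\<And>y. y \<in> Y \<Longrightarrow> H y \<le> H y1"
  shows "H y0 + mu / 2 * (norm (y0 - y1))\<^sup>2 \<le> H y1"
proof -
  have "H y0 - H y1 + mu / 2 * (norm (y0 - y1))\<^sup>2 \<le> 0"
  proof (rule small_le0[where K = "mu / 2 * (norm (y0 - y1))\<^sup>2"])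
    fix t :: real assume t: "0 < t" "t \<le> 1"
    have cv: "convex Y" using sc unfolding strongly_concave_on_def by blast
    have "t *\<^sub>R y0 + (1 - t) *\<^sub>R y1 \<in> Y" using cv y0 y1 t by (simp add: convex_def)
    hence "t * H y0 + (1 - t) * H y1 + mu / 2 * t * (1 - t) * (norm (y0 - y1))\<^sup>2 \<le> H y1"
      using sc y0 y1 t mx unfolding strongly_concave_on_def by (meson less_imp_le order_trans)
    moreover have "t * (H y0 - H y1 + mu / 2 * (norm (y0 - y1))\<^sup>2) - t * (mu / 2 * (norm (y0 - y1))\<^sup>2 * t)
       = t * H y0 + (1 - t) * H y1 + mu / 2 * t * (1 - t) * (norm (y0 - y1))\<^sup>2 - H y1"
      by (simp add: field_simps)
    ultimately have "t * (H y0 - H y1 + mu / 2 * (norm (y0 - y1))\<^sup>2) \<le> t * (mu / 2 * (norm (y0 - y1))\<^sup>2 * t)"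
      by linarith
    thus "H y0 - H y1 + mu / 2 * (norm (y0 - y1))\<^sup>2 \<le> mu / 2 * (norm (y0 - y1))\<^sup>2 * t"
      using t by simp
  qed
  thus ?thesis by simp
qed

lemma argmax_props:
  fixes F :: "'a::euclidean_space \<Rightarrow> real"
  assumes "compact Y" "Y \<noteq> {}" "continuous_on Y F" "strongly_concave_on mu Y F" "mu > 0"
  shows "argmax_on F Y \<in> Y \<and> (\<forall>y\<in>Y. F y \<le> F (argmax_on F Y))"
proof -
  obtain y where y: "y \<in> Y" "\<forall>y'\<in>Y. F y' \<le> F y"
    using continuous_attains_sup[OF assms(1-3)] by blast
  have uniq: "z = y" if z: "z \<in> Y" "\<forall>y'\<in>Y. F y' \<le> F z" for z
  proof -
    have "F z + mu / 2 * (norm (z - y))\<^sup>2 \<le> F y"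
      by (rule sc_max_quad[OF assms(4) z(1) y(1)]) (use y in blast)
    moreover have "F y \<le> F z" using z y(1) by blast
    ultimately have "mu / 2 * (norm (z - y))\<^sup>2 \<le> 0" by linarith
    moreover have "mu / 2 > 0" using assms(5) by simp
    ultimately have "(norm (z - y))\<^sup>2 \<le> 0"
      by (meson mult_pos_pos not_le)
    thus ?thesis by simp
  qed
  have "argmax_on F Y = y" unfolding argmax_on_def
  proof (rule the_equality)
    show "y \<in> Y \<and> (\<forall>y'\<in>Y. F y' \<le> F y)" using y by blast
    show "\<And>z. z \<in> Y \<and> (\<forall>y'\<in>Y. F y' \<le> F z) \<Longrightarrow> z = y" using uniq by blast
  qed
  thus ?thesis using y by simp
qed

lemma max_on_eq:
  assumes "y \<in> Y" "\<forall>y'\<in>Y. F y' \<le> F y"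
  shows "max_on F Y = F y"
  unfolding max_on_def using assms by (intro cSup_eq_maximum) auto

lemma key_bound:
  fixes F H :: "'a::real_inner \<Rightarrow> real"
  assumes sc: "strongly_concave_on mu Y H" and mu: "mu > 0"
    and y0: "y0 \<in> Y" and y1: "y1 \<in> Y"
    and mF: "\<And>y. y \<in> Y \<Longrightarrow> F y \<le> F y0" and mH: "\<And>y. y \<in> Y \<Longrightarrow> H y \<le> H y1"
    and eF: "\<And>t. 0 < t \<Longrightarrow> t \<le> 1 \<Longrightarrow> \<bar>F (y0 + t *\<^sub>R (y1 - y0)) - F y0 - t * (GF \<bullet> (y1 - y0))\<bar> \<le> C * t\<^sup>2"
    and eH: "\<And>t. 0 < t \<Longrightarrow> t \<le> 1 \<Longrightarrow> \<bar>H (y0 + t *\<^sub>R (y1 - y0)) - H y0 - t * (GH \<bullet> (y1 - y0))\<bar> \<le> C * t\<^sup>2"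
  shows "mu * norm (y1 - y0) \<le> norm (GH - GF)"
proof -
  define d where "d = y1 - y0"
  have cv: "convex Y" using sc unfolding strongly_concave_on_def by blast
  have mem: "y0 + t *\<^sub>R d \<in> Y" if "0 \<le> t" "t \<le> 1" for t
  proof -
    have "y0 + t *\<^sub>R d = t *\<^sub>R y1 + (1 - t) *\<^sub>R y0" by (simp add: d_def algebra_simps)
    thus ?thesis using cv y0 y1 that by (simp add: convex_def)
  qed
  have i: "GF \<bullet> d \<le> 0"
  proof (rule small_le0[where K = C])
    fix t :: real assume t: "0 < t" "t \<le> 1"
    have "F (y0 + t *\<^sub>R d) \<le> F y0" using mF mem t by simp
    hence "t * (GF \<bullet> d) \<le> t * (C * t)" using eF[OF t] unfolding d_def
      by (simp add: power2_eq_square algebra_simps)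
    thus "GF \<bullet> d \<le> C * t" using t by simp
  qed
  have ii: "H y0 + mu / 2 * (norm d)\<^sup>2 \<le> H y1"
    using sc_max_quad[OF sc y0 y1 mH] by (simp add: d_def norm_minus_commute)
  have iii: "H y1 - H y0 + mu / 2 * (norm d)\<^sup>2 - GH \<bullet> d \<le> 0"
  proof (rule small_le0[where K = "C + mu / 2 * (norm d)\<^sup>2"])
    fix t :: real assume t: "0 < t" "t \<le> 1"
    have eq: "t *\<^sub>R y1 + (1 - t) *\<^sub>R y0 = y0 + t *\<^sub>R d" by (simp add: d_def algebra_simps)
    have "t * H y1 + (1 - t) * H y0 + mu / 2 * t * (1 - t) * (norm (y1 - y0))\<^sup>2 \<le> H (y0 + t *\<^sub>R d)"
      using sc y0 y1 t unfolding strongly_concave_on_def eq[symmetric] by auto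
    also have "\<dots> \<le> H y0 + t * (GH \<bullet> d) + C * t\<^sup>2" using eH[OF t] unfolding d_def by linarith
    finally have h: "t * H y1 + (1 - t) * H y0 + mu / 2 * t * (1 - t) * (norm d)\<^sup>2 \<le> H y0 + t * (GH \<bullet> d) + C * t\<^sup>2"
      unfolding d_def .
    have "t * (H y1 - H y0 + mu / 2 * (norm d)\<^sup>2 - GH \<bullet> d) - t * ((C + mu / 2 * (norm d)\<^sup>2) * t)
      = (t * H y1 + (1 - t) * H y0 + mu / 2 * t * (1 - t) * (norm d)\<^sup>2) - (H y0 + t * (GH \<bullet> d) + C * t\<^sup>2)"
      by (simp add: field_simps power2_eq_square)
    hence "t * (H y1 - H y0 + mu / 2 * (norm d)\<^sup>2 - GH \<bullet> d) \<le> t * ((C + mu / 2 * (norm d)\<^sup>2) * t)"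
      using h by linarith
    thus "H y1 - H y0 + mu / 2 * (norm d)\<^sup>2 - GH \<bullet> d \<le> (C + mu / 2 * (norm d)\<^sup>2) * t"
      using t by simp
  qed
  have "mu * (norm d)\<^sup>2 \<le> (GH - GF) \<bullet> d" using i ii iii by (simp add: inner_diff_left)
  also have "\<dots> \<le> norm (GH - GF) * norm d" by (rule norm_cauchy_schwarz)
  finally have *: "mu * (norm d)\<^sup>2 \<le> norm (GH - GF) * norm d" .
  show ?thesis
  proof (cases "norm d = 0")
    case True thus ?thesis by (simp add: d_def)
  next
    case False
    hence "norm d > 0" by simp
    thus ?thesis using * unfolding d_def[symmetric] by (simp add: power2_eq_square mult.assoc[symmetric])
  qed
qed

lemma descent:
  fixes l :: "'a::real_inner \<Rightarrow> real"
  assumes gd: "\<And>p. GDERIV l p :> gl p" and lip: "C-lipschitz_on UNIV gl"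
  shows "\<bar>l (p + v) - l p - gl p \<bullet> v\<bar> \<le> C * (norm v)\<^sup>2"
proof -
  define phi where "phi = (\<lambda>t::real. l (p + t *\<^sub>R v))"
  have d: "(phi has_derivative (\<lambda>h. (h *\<^sub>R v) \<bullet> gl (p + t *\<^sub>R v))) (at t within {0..1})" for t
  proof -
    have 1: "((\<lambda>t::real. p + t *\<^sub>R v) has_derivative (\<lambda>h. h *\<^sub>R v)) (at t within {0..1})"
      by (auto intro!: derivative_eq_intros)
    have 2: "(l has_derivative (\<lambda>h. h \<bullet> gl (p + t *\<^sub>R v))) (at (p + t *\<^sub>R v))"
      using gd unfolding gderiv_def by blast
    show ?thesis unfolding phi_def
      using has_derivative_compose[OF 1 2] by simp
  qed
  obtain s where s: "s \<in> {0..1}" "phi 1 - phi 0 = (1 *\<^sub>R v) \<bullet> gl (p + s *\<^sub>R v)"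
    using mvt_very_simple[of 0 1 phi "\<lambda>t h. (h *\<^sub>R v) \<bullet> gl (p + t *\<^sub>R v)"] d by auto
  have "l (p + v) - l p - gl p \<bullet> v = v \<bullet> (gl (p + s *\<^sub>R v) - gl p)"
    using s unfolding phi_def by (simp add: inner_diff_right inner_commute)
  also have "\<bar>\<dots>\<bar> \<le> norm v * norm (gl (p + s *\<^sub>R v) - gl p)"
    by (rule Cauchy_Schwarz_ineq2)
  also have "norm (gl (p + s *\<^sub>R v) - gl p) \<le> C * norm (s *\<^sub>R v)"
    using lip unfolding lipschitz_on_def dist_norm by (metis add_diff_cancel_left' UNIV_I)
  also have "norm (s *\<^sub>R v) \<le> norm v" using s by (auto intro: mult_left_le_one_le)
  finally show ?thesis
    using lip unfolding lipschitz_on_def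
    by (smt (verit, ccfv_SIG) mult_left_mono norm_ge_zero power2_eq_square mult.assoc mult.commute)
qed

lemma int_norm_le:
  fixes g :: "'w \<Rightarrow> 'b::{banach, second_countable_topology}"
  assumes P: "prob_space M" and ig: "integrable M g" and b: "AE w in M. norm (g w) \<le> c"
  shows "norm (integral\<^sup>L M g) \<le> c"
proof -
  have "norm (integral\<^sup>L M g) \<le> (\<integral>w. norm (g w) \<partial>M)" by (rule integral_norm_bound)
  also have "\<dots> \<le> c"
    by (rule prob_space.integral_le_const[OF P]) (use ig b in auto)
  finally show ?thesis .
qed

lemma intfun_sc:
  fixes l :: "'a \<times> 'b::real_normed_vector \<times> 'c \<Rightarrow> real" and M :: "'w measure"
  assumes P: "prob_space M" and int: "\<And>y. integrable M (\<lambda>w. l (x, y, Z w))"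
    and sc: "\<And>z. strongly_concave_on mu Y (\<lambda>y. l (x, y, z))"
  shows "strongly_concave_on mu Y (\<lambda>y. \<integral>w. l (x, y, Z w) \<partial>M)"
  unfolding strongly_concave_on_def
proof (intro conjI ballI allI impI)
  show "convex Y" using sc unfolding strongly_concave_on_def by blast
  fix u v and t :: real assume uv: "u \<in> Y" "v \<in> Y" and t: "0 \<le> t \<and> t \<le> 1"
  have 1: "measure M (space M) = 1" using prob_space.prob_space[OF P] .
  have "t * (\<integral>w. l (x, u, Z w) \<partial>M) + (1 - t) * (\<integral>w. l (x, v, Z w) \<partial>M) + mu / 2 * t * (1 - t) * (norm (u - v))\<^sup>2
     = (\<integral>w. t * l (x, u, Z w) + (1 - t) * l (x, v, Z w) + mu / 2 * t * (1 - t) * (norm (u - v))\<^sup>2 \<partial>M)"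
  proof -
    define c where "c = mu / 2 * t * (1 - t) * (norm (u - v))\<^sup>2"
    have ic: "integrable M (\<lambda>w. c)" using P by (simp add: prob_space.finite_measure finite_measure.integrable_const)
    have ia: "integrable M (\<lambda>w. t * l (x, u, Z w))" "integrable M (\<lambda>w. (1 - t) * l (x, v, Z w))"
      using int by auto
    have "(\<integral>w. t * l (x, u, Z w) + (1 - t) * l (x, v, Z w) + c \<partial>M)
        = (\<integral>w. t * l (x, u, Z w) + (1 - t) * l (x, v, Z w) \<partial>M) + (\<integral>w. c \<partial>M)"
      using Bochner_Integration.integral_add[OF Bochner_Integration.integrable_add[OF ia] ic] by simp
    also have "(\<integral>w. t * l (x, u, Z w) + (1 - t) * l (x, v, Z w) \<partial>M)
        = (\<integral>w. t * l (x, u, Z w) \<partial>M) + (\<integral>w. (1 - t) * l (x, v, Z w) \<partial>M)"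
      using Bochner_Integration.integral_add[OF ia] by simp
    finally show ?thesis unfolding c_def by (simp add: 1)
  qed
  also have "\<dots> \<le> (\<integral>w. l (x, t *\<^sub>R u + (1 - t) *\<^sub>R v, Z w) \<partial>M)"
  proof (rule integral_mono)
    show "integrable M (\<lambda>w. t * l (x, u, Z w) + (1 - t) * l (x, v, Z w) + mu / 2 * t * (1 - t) * (norm (u - v))\<^sup>2)"
      using int P by (auto intro!: integrable_add simp: prob_space.finite_measure finite_measure.integrable_const)
    show "integrable M (\<lambda>w. l (x, t *\<^sub>R u + (1 - t) *\<^sub>R v, Z w))" by (rule int)
    fix w show "t * l (x, u, Z w) + (1 - t) * l (x, v, Z w) + mu / 2 * t * (1 - t) * (norm (u - v))\<^sup>2
        \<le> l (x, t *\<^sub>R u + (1 - t) *\<^sub>R v, Z w)"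
      using sc[of "Z w"] uv t unfolding strongly_concave_on_def by blast
  qed
  finally show "t * (\<integral>w. l (x, u, Z w) \<partial>M) + (1 - t) * (\<integral>w. l (x, v, Z w) \<partial>M) + mu / 2 * t * (1 - t) * (norm (u - v))\<^sup>2
     \<le> (\<integral>w. l (x, t *\<^sub>R u + (1 - t) *\<^sub>R v, Z w) \<partial>M)" .
qed

lemma intfun_lip:
  fixes l :: "'a::real_normed_vector \<times> 'b::real_normed_vector \<times> 'c::real_normed_vector \<Rightarrow> real" and M :: "'w measure"
  assumes P: "prob_space M" and int: "\<And>y. integrable M (\<lambda>w. l (x, y, Z w))"
    and lip: "L-lipschitz_on UNIV l"
  shows "L-lipschitz_on UNIV (\<lambda>y. \<integral>w. l (x, y, Z w) \<partial>M)"
proof (rule lipschitz_onI)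
  show "0 \<le> L" using lip unfolding lipschitz_on_def by blast
  fix y y' :: 'b
  have "dist (\<integral>w. l (x, y, Z w) \<partial>M) (\<integral>w. l (x, y', Z w) \<partial>M)
      = norm (\<integral>w. l (x, y, Z w) - l (x, y', Z w) \<partial>M)"
    using int by (simp add: dist_norm)
  also have "\<dots> \<le> L * dist y y'"
  proof (rule int_norm_le[OF P])
    show "integrable M (\<lambda>w. l (x, y, Z w) - l (x, y', Z w))" using int by auto
    show "AE w in M. norm (l (x, y, Z w) - l (x, y', Z w)) \<le> L * dist y y'"
    proof (rule AE_I2)
    fix w
    have "dist (l (x, y, Z w)) (l (x, y', Z w)) \<le> L * dist (x, y, Z w) (x, y', Z w)"
      using lip unfolding lipschitz_on_def by blast
    thus "norm (l (x, y, Z w) - l (x, y', Z w)) \<le> L * dist y y'"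
      by (simp add: dist_norm dist_prod_def)
    qed
  qed
  finally show "dist (\<integral>w. l (x, y, Z w) \<partial>M) (\<integral>w. l (x, y', Z w) \<partial>M) \<le> L * dist y y'" .
qed

lemma intfun_exp:
  fixes l :: "'a::real_inner \<times> 'b::euclidean_space \<times> 'c::real_inner \<Rightarrow> real" and M :: "'w measure"
  assumes P: "prob_space M" and int: "\<And>y. integrable M (\<lambda>w. l (x, y, Z w))"
    and intg: "\<And>y. integrable M (\<lambda>w. fst (snd (gl (x, y, Z w))))"
    and gd: "\<And>p. GDERIV l p :> gl p" and lip: "C-lipschitz_on UNIV gl"
  shows "\<bar>(\<integral>w. l (x, y + t *\<^sub>R d, Z w) \<partial>M) - (\<integral>w. l (x, y, Z w) \<partial>M)
           - t * ((\<integral>w. fst (snd (gl (x, y, Z w))) \<partial>M) \<bullet> d)\<bar> \<le> C * (norm d)\<^sup>2 * t\<^sup>2"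
proof -
  have pw: "\<bar>l (x, y + t *\<^sub>R d, Z w) - l (x, y, Z w) - t * (fst (snd (gl (x, y, Z w))) \<bullet> d)\<bar> \<le> C * (norm d)\<^sup>2 * t\<^sup>2" for w
  proof -
    have "\<bar>l ((x, y, Z w) + (0, t *\<^sub>R d, 0)) - l (x, y, Z w) - gl (x, y, Z w) \<bullet> (0, t *\<^sub>R d, 0)\<bar>
          \<le> C * (norm (0::'a, t *\<^sub>R d, 0::'c))\<^sup>2"
      by (rule descent[OF gd lip])
    moreover have "gl (x, y, Z w) \<bullet> (0::'a, t *\<^sub>R d, 0::'c) = t * (fst (snd (gl (x, y, Z w))) \<bullet> d)"
      by (simp add: inner_prod_def)
    moreover have "(norm (0::'a, t *\<^sub>R d, 0::'c))\<^sup>2 = (norm d)\<^sup>2 * t\<^sup>2"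
      by (simp add: norm_Pair power_mult_distrib)
    ultimately show ?thesis by (simp add: mult.assoc)
  qed
  have "(\<integral>w. l (x, y + t *\<^sub>R d, Z w) \<partial>M) - (\<integral>w. l (x, y, Z w) \<partial>M)
           - t * ((\<integral>w. fst (snd (gl (x, y, Z w))) \<partial>M) \<bullet> d)
      = (\<integral>w. l (x, y + t *\<^sub>R d, Z w) - l (x, y, Z w) - t * (fst (snd (gl (x, y, Z w))) \<bullet> d) \<partial>M)"
    using int intg by simp
  also have "\<bar>\<dots>\<bar> \<le> C * (norm d)\<^sup>2 * t\<^sup>2"
    using int_norm_le[OF P, of "\<lambda>w. l (x, y + t *\<^sub>R d, Z w) - l (x, y, Z w) - t * (fst (snd (gl (x, y, Z w))) \<bullet> d)"]
      pw int intg by (auto intro!: AE_I2)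
  finally show ?thesis .
qed


lemma lip_slice_l:
  fixes l :: "'a::real_normed_vector \<times> 'b::real_normed_vector \<times> 'c::real_normed_vector \<Rightarrow> 'e::real_normed_vector"
  assumes "L-lipschitz_on UNIV l"
  shows "L-lipschitz_on UNIV (\<lambda>z. l (x, y, z))"
proof (rule lipschitz_onI)
  show "0 \<le> L" using assms unfolding lipschitz_on_def by blast
  fix z z' :: 'c
  have "dist (l (x, y, z)) (l (x, y, z')) \<le> L * dist (x, y, z) (x, y, z')"
    using assms unfolding lipschitz_on_def by blast
  thus "dist (l (x, y, z)) (l (x, y, z')) \<le> L * dist z z'" by (simp add: dist_prod_def)
qed

lemma lip_gy:
  fixes gl :: "'p::real_normed_vector \<Rightarrow> 'a::real_normed_vector \<times> 'b::real_normed_vector \<times> 'c::real_normed_vector"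
  assumes "L-lipschitz_on UNIV gl"
  shows "L-lipschitz_on UNIV (\<lambda>p. fst (snd (gl p)))"
proof (rule lipschitz_onI)
  show "0 \<le> L" using assms unfolding lipschitz_on_def by blast
  fix p q :: 'p
  have "dist (fst (snd (gl p))) (fst (snd (gl q))) = norm (fst (snd (gl p - gl q)))"
    by (simp add: dist_norm)
  also have "\<dots> \<le> norm (gl p - gl q)" by (rule gy_norm_le)
  also have "\<dots> \<le> L * dist p q" using assms unfolding lipschitz_on_def by (simp add: dist_norm)
  finally show "dist (fst (snd (gl p))) (fst (snd (gl q))) \<le> L * dist p q" .
qed

lemma integrable_lip_shift:
  fixes h :: "'d::euclidean_space \<Rightarrow> 'b::{banach, second_countable_topology}" and P :: "'d measure"
  assumes P: "prob_space P" and Ps: "sets P = sets borel" and ie: "integrable P (\<lambda>e. e)"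
    and lip: "K-lipschitz_on UNIV h"
  shows "integrable P (\<lambda>e. h (c + e))"
proof (rule Bochner_Integration.integrable_bound)
  show "integrable P (\<lambda>e. norm (h c) + K * norm e)"
    using ie P by (auto intro!: Bochner_Integration.integrable_add simp: prob_space.finite_measure finite_measure.integrable_const)
  have "continuous_on UNIV (\<lambda>e. h (c + e))"
    using lipschitz_on_continuous_on[OF lip] by (auto intro!: continuous_on_compose2[of UNIV h] continuous_intros)
  hence "(\<lambda>e. h (c + e)) \<in> borel_measurable borel" by (rule borel_measurable_continuous_onI)
  thus "(\<lambda>e. h (c + e)) \<in> borel_measurable P" using measurable_cong_sets[OF Ps refl, of borel] by metis
  show "AE e in P. norm (h (c + e)) \<le> norm (norm (h c) + K * norm e)"
  proof (rule AE_I2)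
    fix e
    have K: "0 \<le> K" using lip unfolding lipschitz_on_def by blast
    have "dist (h (c + e)) (h c) \<le> K * dist (c + e) c" using lip unfolding lipschitz_on_def by blast
    hence "norm (h (c + e)) \<le> norm (h c) + K * norm e"
      by (simp add: dist_norm) (metis norm_triangle_sub add.commute order_trans add_le_cancel_left)
    thus "norm (h (c + e)) \<le> norm (norm (h c) + K * norm e)" using K by simp
  qed
qed


theorem mainTheorem5:
  fixes l :: "(real^'n) \<times> (real^'m) \<times> (real^'d) \<Rightarrow> real"
    and gl :: "(real^'n) \<times> (real^'m) \<times> (real^'d) \<Rightarrow> (real^'n) \<times> (real^'m) \<times> (real^'d)"
    and psi :: "real^'n \<Rightarrow> real^'d"
    and Dpsi :: "real^'n \<Rightarrow> ((real^'n) \<Rightarrow>\<^sub>L (real^'d))"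
    and Y :: "(real^'m) set"
    and P :: "(real^'d) measure"
    and ell1 L1 ell0 L0 mu delta :: real
    and xhat :: "real^'n"
    and N :: nat
    and xs :: "nat \<Rightarrow> real^'n"
    and eps :: "nat \<Rightarrow> real^'d"
    and B0 :: "real^'d" and B1 :: "real^'d^'n"
    and x :: "real^'n"
  assumes l_grad: "\<And>p. GDERIV l p :> gl p"
    and l_smooth: "ell1-lipschitz_on UNIV gl"
    and l_lip: "L1-lipschitz_on UNIV l"
    and psi_deriv: "\<And>z. (psi has_derivative blinfun_apply (Dpsi z)) (at z)"
    and psi_twice: "\<And>z. Dpsi differentiable (at z)"
    and psi_smooth: "ell0-lipschitz_on UNIV Dpsi"
    and psi_lip: "L0-lipschitz_on UNIV psi"
    and Y_ne: "Y \<noteq> {}" and Y_closed: "closed Y" and Y_convex: "convex Y" and Y_bounded: "bounded Y"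
    and mu_pos: "mu > 0"
    and strong_conc: "\<And>x z. strongly_concave_on mu Y (\<lambda>y. l (x, y, z))"
    and P_prob: "prob_space P"
    and P_sets: "sets P = sets borel"
    and P_compact_support: "\<exists>K. compact K \<and> K \<in> sets P \<and> emeasure P K = 1"
    and P_integrable: "integrable P (\<lambda>e. e)"
    and P_mean: "(\<integral>e. e \<partial>P) = 0"
    and delta_pos: "delta > 0"
    and N_pos: "N > 0"
    and xs_ball: "\<And>i. i < N \<Longrightarrow> xs i \<in> cball xhat delta"
    and least_squares: "\<And>B0' B1'. ls_obj N xs (\<lambda>i. psi (xs i) + eps i) B0 B1
                                   \<le> ls_obj N xs (\<lambda>i. psi (xs i) + eps i) B0' B1'"
    and x_ball: "x \<in> cball xhat delta"
  shows
    "let om = (\<lambda>i. psi (xs i) + eps i);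
         Ek = Sup ((\<lambda>z. norm (psi z - transpose B1 *v z - B0)) ` cball xhat delta);
         ys = ystar P l psi Y x;
         yss = argmax_on (calLs N l psi eps x) Y;
         yks = argmax_on (calLk N l xs om B0 B1 x) Y;
         gy = (\<lambda>p. fst (snd (gl p)));
         xi = (1 / real N) *\<^sub>R (\<Sum>i<N. gy (x, ys, psi x + eps i))
              - (\<integral>e. gy (x, ys, psi x + e) \<partial>P);
         tau = (\<integral>e. l (x, ys, psi x + e) \<partial>P) - (1 / real N) * (\<Sum>i<N. l (x, ys, psi x + eps i))
     in norm (ys - yss) \<le> (1 / mu) * norm xi
      \<and> norm (yks - yss) \<le> (2 * ell1 / mu) * Ek
      \<and> \<bar>PhiF P l psi Y x - max_on (calLk N l xs om B0 B1 x) Y\<bar>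
          \<le> \<bar>tau\<bar> + (L1 / mu) * norm xi + 2 * L1 * (1 + ell1 / mu) * Ek"
proof -
  define om where "om = (\<lambda>i. psi (xs i) + eps i)"
  define Ek where "Ek = Sup ((\<lambda>z. norm (psi z - transpose B1 *v z - B0)) ` cball xhat delta)"
  define gy where "gy = (\<lambda>p. fst (snd (gl p)))"
  define U where "U = measure_pmf (pmf_of_set {..<N})"
  define Zs where "Zs = (\<lambda>i. psi x + eps i)"
  define Zk where "Zk = (\<lambda>i. mk B0 B1 x (resid xs om B0 B1 i))"
  define f where "f = calL P l psi x"
  define gs where "gs = calLs N l psi eps x"
  define gk where "gk = calLk N l xs om B0 B1 x"
  have Nne: "{..<N} \<noteq> {}" using N_pos by auto
  have U_prob: "prob_space U" unfolding U_def by (rule prob_space_measure_pmf)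
  have setU: "set_pmf (pmf_of_set {..<N}) = {..<N}" using Nne by simp
  have intU: "integrable U h" for h :: "nat \<Rightarrow> 'b::{banach, second_countable_topology}"
    unfolding U_def by (rule integrable_measure_pmf_finite) (simp add: setU)
  have intU_eq: "(\<integral>i. h i \<partial>U) = (1 / real N) *\<^sub>R (\<Sum>i<N. h i)" for h :: "nat \<Rightarrow> 'b::{banach, second_countable_topology}"
  proof -
    have "(\<integral>i. h i \<partial>U) = (\<Sum>i<N. pmf (pmf_of_set {..<N}) i *\<^sub>R h i)"
      unfolding U_def by (rule integral_measure_pmf) (use setU in auto)
    also have "\<dots> = (\<Sum>i<N. (1 / real N) *\<^sub>R h i)" using Nne by (intro sum.cong) auto
    finally show ?thesis by (simp add: scaleR_sum_right)
  qed
  have AEU: "AE i in U. Q i" if "\<And>i. i < N \<Longrightarrow> Q i" for Q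
    unfolding U_def AE_measure_pmf_iff using that setU by auto
  have P_prob': "prob_space P" by (rule P_prob)
  have Ycomp: "compact Y" using Y_closed Y_bounded by (simp add: compact_eq_bounded_closed)
  have L1nn: "0 \<le> L1" using l_lip unfolding lipschitz_on_def by blast
  have ell1nn: "0 \<le> ell1" using l_smooth unfolding lipschitz_on_def by blast
  have gy_lip: "ell1-lipschitz_on UNIV gy" unfolding gy_def by (rule lip_gy[OF l_smooth])
  have intP_l: "integrable P (\<lambda>e. l (x, y, psi x + e))" for y
    by (rule integrable_lip_shift[OF P_prob P_sets P_integrable lip_slice_l[OF l_lip]])
  have intP_g: "integrable P (\<lambda>e. gy (x, y, psi x + e))" for y
    by (rule integrable_lip_shift[OF P_prob P_sets P_integrable lip_slice_l[OF gy_lip]])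
  have f_eq: "f = (\<lambda>y. \<integral>e. l (x, y, psi x + e) \<partial>P)" by (simp add: f_def calL_def fun_eq_iff)
  have gs_eq: "gs = (\<lambda>y. \<integral>i. l (x, y, Zs i) \<partial>U)"
    by (simp add: gs_def calLs_def fun_eq_iff intU_eq Zs_def)
  have gk_eq: "gk = (\<lambda>y. \<integral>i. l (x, y, Zk i) \<partial>U)"
    by (simp add: gk_def calLk_def fun_eq_iff intU_eq Zk_def)
  have f_sc: "strongly_concave_on mu Y f"
    unfolding f_eq by (rule intfun_sc[OF P_prob intP_l strong_conc])
  have gs_sc: "strongly_concave_on mu Y gs"
    unfolding gs_eq by (rule intfun_sc[OF U_prob intU strong_conc])
  have gk_sc: "strongly_concave_on mu Y gk"
    unfolding gk_eq by (rule intfun_sc[OF U_prob intU strong_conc])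
  have f_lip: "L1-lipschitz_on UNIV f"
    unfolding f_eq by (rule intfun_lip[OF P_prob intP_l l_lip])
  have gs_lip: "L1-lipschitz_on UNIV gs"
    unfolding gs_eq by (rule intfun_lip[OF U_prob intU l_lip])
  have gk_lip: "L1-lipschitz_on UNIV gk"
    unfolding gk_eq by (rule intfun_lip[OF U_prob intU l_lip])
  have cont: "continuous_on Y h" if "L1-lipschitz_on UNIV h" for h :: "real^'m \<Rightarrow> real"
    using lipschitz_on_continuous_on[OF that] continuous_on_subset by blast
  define ys where "ys = ystar P l psi Y x"
  define yss where "yss = argmax_on (calLs N l psi eps x) Y"
  define yks where "yks = argmax_on (calLk N l xs om B0 B1 x) Y"
  have ys_eq: "ys = argmax_on f Y" by (simp add: ys_def ystar_def f_def)
  have ys: "ys \<in> Y" "\<And>y. y \<in> Y \<Longrightarrow> f y \<le> f ys"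
    using argmax_props[OF Ycomp Y_ne cont[OF f_lip] f_sc mu_pos] unfolding ys_eq[symmetric] by auto
  have yss: "yss \<in> Y" "\<And>y. y \<in> Y \<Longrightarrow> gs y \<le> gs yss"
    using argmax_props[OF Ycomp Y_ne cont[OF gs_lip] gs_sc mu_pos] unfolding yss_def gs_def by auto
  have yks: "yks \<in> Y" "\<And>y. y \<in> Y \<Longrightarrow> gk y \<le> gk yks"
    using argmax_props[OF Ycomp Y_ne cont[OF gk_lip] gk_sc mu_pos] unfolding yks_def gk_def by auto
  have psi_cont: "continuous_on (cball xhat delta) psi"
    using has_derivative_continuous[OF psi_deriv] by (intro continuous_at_imp_continuous_on) auto
  have Ek_bdd: "bdd_above ((\<lambda>z. norm (psi z - transpose B1 *v z - B0)) ` cball xhat delta)"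
  proof -
    have "continuous_on (cball xhat delta) (\<lambda>z. norm (psi z - transpose B1 *v z - B0))"
      by (intro continuous_intros psi_cont)
    hence "compact ((\<lambda>z. norm (psi z - transpose B1 *v z - B0)) ` cball xhat delta)"
      by (rule compact_continuous_image[OF _ compact_cball])
    thus ?thesis by (intro bounded_imp_bdd_above compact_imp_bounded)
  qed
  have Ek_ub: "norm (psi z - transpose B1 *v z - B0) \<le> Ek" if "z \<in> cball xhat delta" for z
    unfolding Ek_def by (rule cSup_upper) (use that Ek_bdd in auto)
  have Zdiff: "norm (Zk i - Zs i) \<le> 2 * Ek" if "i < N" for i
  proof -
    have "Zk i - Zs i = (psi (xs i) - transpose B1 *v xs i - B0) - (psi x - transpose B1 *v x - B0)"
      by (simp add: Zk_def Zs_def mk_def resid_def om_def algebra_simps)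
    also have "norm \<dots> \<le> norm (psi (xs i) - transpose B1 *v xs i - B0) + norm (psi x - transpose B1 *v x - B0)"
      by (rule norm_triangle_ineq4)
    also have "\<dots> \<le> Ek + Ek" using Ek_ub[OF xs_ball[OF that]] Ek_ub[OF x_ball] by linarith
    finally show ?thesis by simp
  qed
  define GF where "GF = (\<integral>e. gy (x, ys, psi x + e) \<partial>P)"
  define GH where "GH = (\<integral>i. gy (x, ys, Zs i) \<partial>U)"
  define xi where "xi = (1 / real N) *\<^sub>R (\<Sum>i<N. gy (x, ys, psi x + eps i)) - (\<integral>e. gy (x, ys, psi x + e) \<partial>P)"
  have xi_eq: "xi = GH - GF" by (simp add: xi_def GH_def GF_def intU_eq Zs_def)
  have partA: "mu * norm (yss - ys) \<le> norm xi"
    unfolding xi_eq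
  proof (rule key_bound[OF gs_sc mu_pos ys(1) yss(1), where F = f and C = "ell1 * (norm (yss - ys))\<^sup>2"])
    show "\<And>y. y \<in> Y \<Longrightarrow> f y \<le> f ys" by (rule ys(2))
    show "\<And>y. y \<in> Y \<Longrightarrow> gs y \<le> gs yss" by (rule yss(2))
    fix t :: real
    show "\<bar>f (ys + t *\<^sub>R (yss - ys)) - f ys - t * (GF \<bullet> (yss - ys))\<bar> \<le> ell1 * (norm (yss - ys))\<^sup>2 * t\<^sup>2"
      unfolding f_eq GF_def gy_def by (rule intfun_exp[OF P_prob intP_l intP_g[unfolded gy_def] l_grad l_smooth])
    show "\<bar>gs (ys + t *\<^sub>R (yss - ys)) - gs ys - t * (GH \<bullet> (yss - ys))\<bar> \<le> ell1 * (norm (yss - ys))\<^sup>2 * t\<^sup>2"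
      unfolding gs_eq GH_def gy_def by (rule intfun_exp[OF U_prob intU intU l_grad l_smooth])
  qed
  define GF2 where "GF2 = (\<integral>i. gy (x, yss, Zs i) \<partial>U)"
  define GH2 where "GH2 = (\<integral>i. gy (x, yss, Zk i) \<partial>U)"
  have partB0: "mu * norm (yks - yss) \<le> norm (GH2 - GF2)"
  proof (rule key_bound[OF gk_sc mu_pos yss(1) yks(1), where F = gs and C = "ell1 * (norm (yks - yss))\<^sup>2"])
    show "\<And>y. y \<in> Y \<Longrightarrow> gs y \<le> gs yss" by (rule yss(2))
    show "\<And>y. y \<in> Y \<Longrightarrow> gk y \<le> gk yks" by (rule yks(2))
    fix t :: real
    show "\<bar>gs (yss + t *\<^sub>R (yks - yss)) - gs yss - t * (GF2 \<bullet> (yks - yss))\<bar> \<le> ell1 * (norm (yks - yss))\<^sup>2 * t\<^sup>2"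
      unfolding gs_eq GF2_def gy_def by (rule intfun_exp[OF U_prob intU intU l_grad l_smooth])
    show "\<bar>gk (yss + t *\<^sub>R (yks - yss)) - gk yss - t * (GH2 \<bullet> (yks - yss))\<bar> \<le> ell1 * (norm (yks - yss))\<^sup>2 * t\<^sup>2"
      unfolding gk_eq GH2_def gy_def by (rule intfun_exp[OF U_prob intU intU l_grad l_smooth])
  qed
  have GB: "norm (GH2 - GF2) \<le> 2 * ell1 * Ek"
  proof -
    have "GH2 - GF2 = (\<integral>i. gy (x, yss, Zk i) - gy (x, yss, Zs i) \<partial>U)"
      unfolding GH2_def GF2_def by (rule Bochner_Integration.integral_diff[symmetric]) (rule intU)+
    also have "norm \<dots> \<le> 2 * ell1 * Ek"
    proof (rule int_norm_le[OF U_prob intU])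
      show "AE i in U. norm (gy (x, yss, Zk i) - gy (x, yss, Zs i)) \<le> 2 * ell1 * Ek"
      proof (rule AEU)
        fix i assume i: "i < N"
        have "norm (gy (x, yss, Zk i) - gy (x, yss, Zs i)) \<le> ell1 * dist (Zk i) (Zs i)"
          using lip_slice_l[OF gy_lip, of x yss] unfolding lipschitz_on_def dist_norm[symmetric] by blast
        also have "\<dots> \<le> ell1 * (2 * Ek)" using Zdiff[OF i] ell1nn by (simp add: dist_norm mult_left_mono)
        finally show "norm (gy (x, yss, Zk i) - gy (x, yss, Zs i)) \<le> 2 * ell1 * Ek" by simp
      qed
    qed
    finally show ?thesis .
  qed
  have partA': "norm (ys - yss) \<le> (1 / mu) * norm xi"
    using partA mu_pos by (simp add: norm_minus_commute field_simps)
  have partB': "norm (yks - yss) \<le> (2 * ell1 / mu) * Ek"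
    using partB0 GB mu_pos by (simp add: field_simps)
  have Phi_eq: "PhiF P l psi Y x = f ys"
    unfolding PhiF_def f_def[symmetric] by (rule max_on_eq) (use ys in auto)
  have Phik_eq: "max_on (calLk N l xs om B0 B1 x) Y = gk yks"
    unfolding gk_def[symmetric] by (rule max_on_eq) (use yks in auto)
  define tau where "tau = (\<integral>e. l (x, ys, psi x + e) \<partial>P) - (1 / real N) * (\<Sum>i<N. l (x, ys, psi x + eps i))"
  have tau_eq: "tau = f ys - gs ys" by (simp add: tau_def f_eq gs_def calLs_def)
  have c1: "\<bar>gs ys - gs yss\<bar> \<le> L1 * norm (ys - yss)"
    using gs_lip unfolding lipschitz_on_def dist_norm[symmetric] by (simp add: dist_real_def)
  have c2: "\<bar>gs yss - gs yks\<bar> \<le> L1 * norm (yks - yss)"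
    using gs_lip unfolding lipschitz_on_def by (simp add: dist_real_def dist_norm) (metis norm_minus_commute)
  have c3: "\<bar>gs yks - gk yks\<bar> \<le> L1 * (2 * Ek)"
  proof -
    have "gs yks - gk yks = (\<integral>i. l (x, yks, Zs i) - l (x, yks, Zk i) \<partial>U)"
      unfolding gs_eq gk_eq by (rule Bochner_Integration.integral_diff[symmetric]) (rule intU)+
    also have "\<bar>\<dots>\<bar> \<le> L1 * (2 * Ek)"
    proof -
      have "AE i in U. norm (l (x, yks, Zs i) - l (x, yks, Zk i)) \<le> L1 * (2 * Ek)"
      proof (rule AEU)
        fix i assume i: "i < N"
        have "norm (l (x, yks, Zs i) - l (x, yks, Zk i)) \<le> L1 * dist (Zs i) (Zk i)"
          using lip_slice_l[OF l_lip, of x yks] unfolding lipschitz_on_def dist_norm[symmetric] by blast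
        also have "\<dots> \<le> L1 * (2 * Ek)" using Zdiff[OF i] L1nn
          by (simp add: dist_norm norm_minus_commute mult_left_mono)
        finally show "norm (l (x, yks, Zs i) - l (x, yks, Zk i)) \<le> L1 * (2 * Ek)" .
      qed
      thus ?thesis using int_norm_le[OF U_prob intU, of "\<lambda>i. l (x, yks, Zs i) - l (x, yks, Zk i)" "L1 * (2 * Ek)"] by simp
    qed
    finally show ?thesis .
  qed
  have partC: "\<bar>PhiF P l psi Y x - max_on (calLk N l xs om B0 B1 x) Y\<bar>
          \<le> \<bar>tau\<bar> + (L1 / mu) * norm xi + 2 * L1 * (1 + ell1 / mu) * Ek"
  proof -
    have "\<bar>PhiF P l psi Y x - max_on (calLk N l xs om B0 B1 x) Y\<bar>
        \<le> \<bar>tau\<bar> + L1 * norm (ys - yss) + L1 * norm (yks - yss) + L1 * (2 * Ek)"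
      unfolding Phi_eq Phik_eq tau_eq using c1 c2 c3 by linarith
    also have "L1 * norm (ys - yss) \<le> L1 * ((1 / mu) * norm xi)"
      by (rule mult_left_mono[OF partA' L1nn])
    also have "L1 * norm (yks - yss) \<le> L1 * ((2 * ell1 / mu) * Ek)"
      by (rule mult_left_mono[OF partB' L1nn])
    finally show ?thesis by (simp add: field_simps)
  qed
  show ?thesis
    unfolding Let_def
    using partA' partB' partC
    unfolding ys_def yss_def yks_def xi_def tau_def gy_def om_def Ek_def
    by blast
qed

end
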